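(* Let $f_0:\mathbb{R}^n\times[0,\infty)\to\mathbb{R}$ be twice continuously differentiable in $\mathbf{x}$ and continuously differentiable in $t$, with $\nabla_{\mathbf{x}\mathbf{x}} f_0(\mathbf{x},t)\succeq m\mathbf{I}_n$ for some $m>0$ and all $(\mathbf{x},t)$. Let $\mathbf{x}^\star(t)=\arg\min_{\mathbf{x}\in\mathbb{R}^n} f_0(\mathbf{x},t)$. Let $\mathbf{P}\in\mathbb{S}^n_{++}$ with $\mathbf{P}\succeq\sigma\mathbf{I}_n$ for some $\sigma>0$, and let $\mathbf{x}(t)$, $t\ge 0$, be a solution of $$\dot{\mathbf{x}}(t)=-\nabla_{\mathbf{x}\mathbf{x}} f_0(\mathbf{x}(t),t)^{-1}\big[\mathbf{P}\nabla_{\mathbf{x}} f_0(\mathbf{x}(t),t)+\nabla_{\mathbf{x}t} f_0(\mathbf{x}(t),t)\big],\qquad \mathbf{x}(0)=\mathbf{x}_0,$$ with $\mathbf{x}_0\in\mathbb{R}^n$ arbitrary. Then there is a constant $0\le C(\mathbf{x}_0,m)<\infty$ (e.g. $C=\tfrac{2}{m}\|\nabla_{\mathbf{x}} f_0(\mathbf{x}_0,0)\|_2$) such that for all $t\ge 0$, $$\|\mathbf{x}(t)-\mathbf{x}^\star(t)\|_2\le C(\mathbf{x}_0,m)\,e^{-\sigma t}.$$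
   Context: $\nabla_{\mathbf{x}} f_0$ is the gradient in $\mathbf{x}$, $\nabla_{\mathbf{x}\mathbf{x}} f_0$ the Hessian in $\mathbf{x}$, and $\nabla_{\mathbf{x}t} f_0\in\mathbb{R}^n$ the partial derivative of $\nabla_{\mathbf{x}} f_0$ with respect to $t$. $\mathbb{S}^n_{++}$ denotes the symmetric positive definite $n\times n$ matrices; $\mathbf{A}\succeq\mathbf{B}$ means $\mathbf{A}-\mathbf{B}$ is positive semidefinite. *)

theory Defs
  imports "HOL-Analysis.Analysis"
begin

end

theory Submission
  imports Defs
begin

theorem lemma1:
  fixes f0 :: "real^'n \<Rightarrow> real \<Rightarrow> real"
    and grad :: "real^'n \<Rightarrow> real \<Rightarrow> real^'n"
    and hess :: "real^'n \<Rightarrow> real \<Rightarrow> real^'n^'n"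
    and gradt :: "real^'n \<Rightarrow> real \<Rightarrow> real^'n"
    and ft :: "real^'n \<Rightarrow> real \<Rightarrow> real"
    and xstar :: "real \<Rightarrow> real^'n"
    and x :: "real \<Rightarrow> real^'n"
    and P :: "real^'n^'n"
    and m \<sigma> :: real and x0 :: "real^'n"
  assumes grad_deriv: "\<And>y t. t \<ge> 0 \<Longrightarrow>
        ((\<lambda>z. f0 z t) has_derivative (\<lambda>h. grad y t \<bullet> h)) (at y)"
    and hess_deriv: "\<And>y t. t \<ge> 0 \<Longrightarrow>
        ((\<lambda>z. grad z t) has_derivative (\<lambda>h. hess y t *v h)) (at y)"
    and hess_cont: "continuous_on (UNIV \<times> {0..}) (\<lambda>(y, t). hess y t)"
    and f0_t_deriv: "\<And>y t. t \<ge> 0 \<Longrightarrow>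
        ((\<lambda>s. f0 y s) has_real_derivative ft y t) (at t within {0..})"
    and ft_cont: "continuous_on (UNIV \<times> {0..}) (\<lambda>(y, t). ft y t)"
    and gradt_deriv: "\<And>y t. t \<ge> 0 \<Longrightarrow>
        ((\<lambda>s. grad y s) has_vector_derivative gradt y t) (at t within {0..})"
    and gradt_cont: "continuous_on (UNIV \<times> {0..}) (\<lambda>(y, t). gradt y t)"
    and m_pos: "m > 0"
    and strong_convex: "\<And>y t v. t \<ge> 0 \<Longrightarrow> v \<bullet> (hess y t *v v) \<ge> m * (v \<bullet> v)"
    and xstar_min: "\<And>t y. t \<ge> 0 \<Longrightarrow> f0 (xstar t) t \<le> f0 y t"
    and P_sym: "transpose P = P"
    and sigma_pos: "\<sigma> > 0"
    and P_ge: "\<And>v. v \<bullet> (P *v v) \<ge> \<sigma> * (v \<bullet> v)"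
    and x_ode: "\<And>t. t \<ge> 0 \<Longrightarrow>
        (x has_vector_derivative
           - (matrix_inv (hess (x t) t) *v (P *v grad (x t) t + gradt (x t) t))) (at t within {0..})"
    and x_init: "x 0 = x0"
  shows "\<exists>C. 0 \<le> C \<and> (\<forall>t\<ge>0. norm (x t - xstar t) \<le> C * exp (- \<sigma> * t))"
proof -
  define v where "v = (\<lambda>t. - (matrix_inv (hess (x t) t) *v (P *v grad (x t) t + gradt (x t) t)))"
  define g where "g = (\<lambda>t. grad (x t) t)"
  have Hinv: "hess y s *v (matrix_inv (hess y s) *v w) = w" if s0: "s \<ge> 0" for y s w
  proof -
    let ?H = "hess y s"
    have "inj ((*v) ?H)"
    proof (rule injI)
      fix a b assume ab: "?H *v a = ?H *v b"
      have "?H *v (a - b) = 0" using ab by (simp add: matrix_vector_mult_diff_distrib)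
      then have "m * ((a - b) \<bullet> (a - b)) \<le> 0" using strong_convex[where y=y and t=s and v="a - b", OF s0] by simp
      then have "(a - b) \<bullet> (a - b) \<le> 0" using m_pos by (simp add: mult_le_0_iff)
      then show "a = b" by (metis eq_iff_diff_eq_0 inner_ge_zero inner_eq_zero_iff order_antisym)
    qed
    then have "invertible ?H"
      using matrix_left_invertible_injective invertible_left_inverse by blast
    then have "?H ** matrix_inv ?H = mat 1 \<and> matrix_inv ?H ** ?H = mat 1"
      unfolding invertible_def matrix_inv_def by (rule someI_ex)
    then show ?thesis by (simp add: matrix_vector_mul_assoc)
  qed
  have chain: "(g has_vector_derivative (- (P *v g t))) (at t within {0..})" if t0: "t \<ge> 0" for t
  proof -
    define B where "B = (\<lambda>s y. Blinfun (\<lambda>h. hess y s *v h))"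
    have Bapp: "blinfun_apply (B s y) = (\<lambda>h. hess y s *v h)" for s y
      unfolding B_def by (rule bounded_linear_Blinfun_apply) (rule matrix_vector_mul_bounded_linear)
    have hc: "continuous_on ({0..} \<times> UNIV) (\<lambda>p. hess (snd p) (fst p))"
    proof -
      have "continuous_on ({0..} \<times> UNIV) ((\<lambda>(y, t). hess y t) \<circ> (\<lambda>p. (snd p, fst p)))"
        by (rule continuous_on_compose[OF _ continuous_on_subset[OF hess_cont]])
           (auto intro!: continuous_intros)
      then show ?thesis by (simp add: o_def)
    qed
    have Beq: "B s y = blinfun_of_matrix (\<lambda>i j. (hess y s *v j) \<bullet> i)" for s y
      unfolding B_def by (rule Blinfun_eq_matrix) (rule matrix_vector_mul_bounded_linear)
    have Bc: "continuous_on ({0..} \<times> UNIV) (\<lambda>(s, y). B s y)"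
    proof -
      have "continuous_on ({0..} \<times> UNIV) (\<lambda>p. blinfun_of_matrix (\<lambda>i j. (hess (snd p) (fst p) *v j) \<bullet> i))"
        apply (intro continuous_on_blinfun_of_matrix)
        using hc unfolding inner_vec_def matrix_vector_mult_def
        by (intro continuous_intros) auto
      then show ?thesis by (simp add: Beq split_beta')
    qed
    have pd: "((\<lambda>(s, y). grad y s) has_derivative (\<lambda>(ts, ty). ts *\<^sub>R gradt (x t) t + B t (x t) ty))
               (at (t, x t) within {0..} \<times> UNIV)"
    proof (rule has_derivative_partialsI[where f="\<lambda>s y. grad y s"])
      show "((\<lambda>s. grad (x t) s) has_derivative (\<lambda>h. h *\<^sub>R gradt (x t) t)) (at t within {0..})"
        using gradt_deriv[OF t0] by (simp add: has_vector_derivative_def)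
      show "((\<lambda>y. grad y s) has_derivative blinfun_apply (B s y)) (at y within UNIV)"
        if "s \<in> {0..}" for s y
        using hess_deriv[of s y] that by (simp add: Bapp)
      show "continuous (at (t, x t) within {0..} \<times> UNIV) (\<lambda>(s, y). B s y)"
        using Bc t0 by (simp add: continuous_on_eq_continuous_within)
    qed (auto)
    have xd: "((\<lambda>s. (s, x s)) has_derivative (\<lambda>h. (h, h *\<^sub>R v t))) (at t within {0..})"
      using x_ode[OF t0] unfolding v_def has_vector_derivative_def
      by (intro has_derivative_Pair has_derivative_ident) auto
    have "((\<lambda>s. (\<lambda>(s, y). grad y s) (s, x s)) has_derivative
            (\<lambda>h. (\<lambda>(ts, ty). ts *\<^sub>R gradt (x t) t + B t (x t) ty) (h, h *\<^sub>R v t))) (at t within {0..})"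
      by (rule has_derivative_in_compose[OF xd has_derivative_subset[OF pd]]) auto
    then have "(g has_derivative (\<lambda>h. h *\<^sub>R (gradt (x t) t + hess (x t) t *v v t))) (at t within {0..})"
      by (simp add: g_def Bapp scaleR_right_distrib matrix_vector_mult_scaleR)
    moreover have "gradt (x t) t + hess (x t) t *v v t = - (P *v g t)"
    proof -
      have neg: "A *v (- w) = - (A *v w)" for A :: "real^'n^'n" and w
        by (simp add: vec_eq_iff matrix_vector_mult_def sum_negf)
      show ?thesis unfolding v_def g_def using Hinv[OF t0] by (simp add: neg)
    qed
    ultimately show ?thesis by (simp add: has_vector_derivative_def)
  qed
  have gdecay: "norm (g t) \<le> norm (g 0) * exp (- \<sigma> * t)" if t0: "t \<ge> 0" for t
  proof -
    define k where "k = (\<lambda>s. exp (2 * \<sigma> * s) * (g s \<bullet> g s))"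
    define D where "D = (\<lambda>s. exp (2 * \<sigma> * s) * (2 * \<sigma> * (g s \<bullet> g s) - 2 * (g s \<bullet> (P *v g s))))"
    have kd: "(k has_derivative (\<lambda>h. h * D s)) (at s within {0..})" if s0: "s \<ge> 0" for s
    proof -
      have gd: "(g has_derivative (\<lambda>h. h *\<^sub>R (- (P *v g s)))) (at s within {0..})"
        using chain[OF s0] by (simp add: has_vector_derivative_def)
      have ip: "((\<lambda>s. g s \<bullet> g s) has_derivative
          (\<lambda>h. g s \<bullet> (h *\<^sub>R (- (P *v g s))) + (h *\<^sub>R (- (P *v g s))) \<bullet> g s)) (at s within {0..})"
        by (rule has_derivative_inner[OF gd gd])
      have ed: "((\<lambda>s. exp (2 * \<sigma> * s)) has_derivative (\<lambda>h. h * (2 * \<sigma> * exp (2 * \<sigma> * s)))) (at s within {0..})"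
        by (auto intro!: derivative_eq_intros simp: has_real_derivative_iff_has_vector_derivative[symmetric] has_field_derivative_def[symmetric])
      have "(k has_derivative (\<lambda>h. exp (2 * \<sigma> * s) * (g s \<bullet> (h *\<^sub>R (- (P *v g s))) + (h *\<^sub>R (- (P *v g s))) \<bullet> g s)
              + h * (2 * \<sigma> * exp (2 * \<sigma> * s)) * (g s \<bullet> g s))) (at s within {0..})"
        unfolding k_def by (rule has_derivative_mult[OF ed ip])
      moreover have "(\<lambda>h. exp (2 * \<sigma> * s) * (g s \<bullet> (h *\<^sub>R (- (P *v g s))) + (h *\<^sub>R (- (P *v g s))) \<bullet> g s)
              + h * (2 * \<sigma> * exp (2 * \<sigma> * s)) * (g s \<bullet> g s)) = (\<lambda>h. h * D s)"
        by (rule ext) (simp add: D_def inner_commute algebra_simps)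
      ultimately show ?thesis by simp
    qed
    have Dle: "D s \<le> 0" for s
    proof -
      have "\<sigma> * (g s \<bullet> g s) \<le> g s \<bullet> (P *v g s)" by (rule P_ge)
      then show ?thesis unfolding D_def by (simp add: mult_nonneg_nonpos)
    qed
    obtain z where "z \<in> {0..t}" "k t - k 0 = t * D z"
      using mvt_very_simple[OF t0, of k "\<lambda>s h. h * D s"]
        kd by (force intro: has_derivative_subset)
    then have "k t \<le> k 0" using Dle[of z] t0 mult_nonneg_nonpos[of t "D z"] by linarith
    then have "exp (2 * \<sigma> * t) * (norm (g t))\<^sup>2 \<le> (norm (g 0))\<^sup>2"
      by (simp add: k_def power2_norm_eq_inner)
    then have "(norm (g t))\<^sup>2 \<le> (norm (g 0))\<^sup>2 * exp (- (2 * \<sigma> * t))"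
      by (simp add: exp_minus field_simps)
    also have "\<dots> = (norm (g 0) * exp (- \<sigma> * t))\<^sup>2"
      by (simp add: power_mult_distrib exp_double[symmetric] power2_eq_square exp_add[symmetric])
    finally show ?thesis by (rule power2_le_imp_le) simp
  qed
  have g0star: "grad (xstar t) t = 0" if t0: "t \<ge> 0" for t
  proof -
    have "(\<lambda>h. grad (xstar t) t \<bullet> h) = (\<lambda>v. 0)"
      by (rule differential_zero_maxmin[of "xstar t" UNIV, OF _ _ grad_deriv[OF t0]])
         (use xstar_min[OF t0] in auto)
    then have "grad (xstar t) t \<bullet> grad (xstar t) t = 0" by metis
    then show ?thesis by simp
  qed
  have smono: "m * ((a - b) \<bullet> (a - b)) \<le> (a - b) \<bullet> (grad a t - grad b t)" if t0: "t \<ge> 0" for a b t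
  proof -
    define d where "d = a - b"
    define \<phi> where "\<phi> = (\<lambda>s. d \<bullet> grad (b + s *\<^sub>R d) t)"
    have pd: "(\<phi> has_derivative (\<lambda>h. d \<bullet> (hess (b + s *\<^sub>R d) t *v (h *\<^sub>R d)))) (at s within S)" for s S
    proof -
      have l: "((\<lambda>s. b + s *\<^sub>R d) has_derivative (\<lambda>h. h *\<^sub>R d)) (at s within S)"
        by (auto intro!: derivative_eq_intros)
      have "((\<lambda>s. grad (b + s *\<^sub>R d) t) has_derivative (\<lambda>h. hess (b + s *\<^sub>R d) t *v (h *\<^sub>R d))) (at s within S)"
        using has_derivative_compose[OF l hess_deriv[OF t0]] .
      then show ?thesis unfolding \<phi>_def by (rule has_derivative_inner_right)
    qed
    obtain z where "\<phi> 1 - \<phi> 0 = d \<bullet> (hess (b + z *\<^sub>R d) t *v ((1 - 0) *\<^sub>R d))"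
      using mvt_very_simple[of 0 1 \<phi>, OF _ pd] by auto
    moreover have "m * (d \<bullet> d) \<le> d \<bullet> (hess (b + z *\<^sub>R d) t *v d)" by (rule strong_convex[OF t0])
    ultimately show ?thesis
      by (simp add: \<phi>_def d_def inner_diff_right)
  qed
  have main: "norm (x t - xstar t) \<le> norm (g t) / m" if t0: "t \<ge> 0" for t
  proof -
    define d where "d = x t - xstar t"
    have "m * (norm d)\<^sup>2 \<le> d \<bullet> g t"
      using smono[OF t0, of "x t" "xstar t"] g0star[OF t0]
      by (simp add: d_def g_def power2_norm_eq_inner)
    also have "\<dots> \<le> norm d * norm (g t)" by (rule norm_cauchy_schwarz)
    finally have h: "m * (norm d * norm d) \<le> norm d * norm (g t)" by (simp add: power2_eq_square)
    show ?thesis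
    proof (cases "norm d = 0")
      case True then show ?thesis using m_pos by (simp add: d_def)
    next
      case False
      then have "norm d > 0" by simp
      then have "m * norm d \<le> norm (g t)" using h
        by (metis mult.left_commute mult_le_cancel_left_pos)
      then show ?thesis using m_pos by (simp add: d_def field_simps)
    qed
  qed
  show ?thesis
  proof (intro exI[of _ "norm (grad x0 0) / m"] conjI allI impI)
    show "0 \<le> norm (grad x0 0) / m" using m_pos by simp
    fix t :: real assume t0: "0 \<le> t"
    have "norm (x t - xstar t) \<le> norm (g t) / m" by (rule main[OF t0])
    also have "\<dots> \<le> norm (g 0) * exp (- \<sigma> * t) / m"
      using gdecay[OF t0] m_pos by (simp add: divide_right_mono)
    finally show "norm (x t - xstar t) \<le> norm (grad x0 0) / m * exp (- \<sigma> * t)"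
      by (simp add: g_def x_init)
  qed
qed

end
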